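(* Let $d\ge 1$ and $2\le n_1\le n_2\le\cdots\le n_d$ be integers, and let $G=P_{n_1}\times P_{n_2}\times\cdots\times P_{n_d}$. Then $$\sigma_T(G)= 2\left(\left\lfloor\tfrac{n_1}{2}\right\rfloor+\left\lfloor\tfrac{n_2}{2}\right\rfloor+\cdots+\left\lfloor\tfrac{n_{d-1}}{2}\right\rfloor\right)+1.$$
   Context: $P_n$ is the path on $n$ vertices and $\times$ is the Cartesian product, so $G$ is the $d$-dimensional grid with vertex set $\{(x_1,\dots,x_d): x_i\in\{1,\dots,n_i\}\}$, two vertices adjacent iff they differ by $1$ in exactly one coordinate and agree in all others. For a spanning tree $T$ of a connected graph $G$, $d_T(u,v)$ is the distance between $u$ and $v$ in $T$, $\sigma_T(G,T):=\max_{uv\in E(G)} d_T(u,v)$, and $\sigma_T(G):=\min\{\sigma_T(G,T): T \text{ a spanning tree of } G\}$. An empty sum is $0$. *)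

theory Defs
  imports Main
begin

text \<open>Simple graphs: vertex set V, edge set E of two-element sets.\<close>

definition walk :: "'a set set \<Rightarrow> 'a list \<Rightarrow> bool" where
  "walk T xs \<longleftrightarrow> xs \<noteq> [] \<and> (\<forall>i < length xs - 1. {xs ! i, xs ! (i+1)} \<in> T)"

definition connected_on :: "'a set \<Rightarrow> 'a set set \<Rightarrow> bool" where
  "connected_on V T \<longleftrightarrow>
     (\<forall>u\<in>V. \<forall>v\<in>V. \<exists>xs. walk T xs \<and> hd xs = u \<and> last xs = v)"

definition acyclic_edges :: "'a set set \<Rightarrow> bool" where
  "acyclic_edges T \<longleftrightarrow>
     \<not> (\<exists>xs. length xs \<ge> 3 \<and> distinct xs \<and> walk T xs \<and> {last xs, hd xs} \<in> T)"

definition spanning_tree :: "'a set \<Rightarrow> 'a set set \<Rightarrow> 'a set set \<Rightarrow> bool" where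
  "spanning_tree V E T \<longleftrightarrow> T \<subseteq> E \<and> connected_on V T \<and> acyclic_edges T"

definition tdist :: "'a set set \<Rightarrow> 'a \<Rightarrow> 'a \<Rightarrow> nat" where
  "tdist T u v = (LEAST k. \<exists>xs. walk T xs \<and> hd xs = u \<and> last xs = v \<and> length xs = k + 1)"

definition tree_stretch :: "'a set set \<Rightarrow> 'a set set \<Rightarrow> nat" where
  "tree_stretch E T = Max {tdist T u v | u v. {u, v} \<in> E}"

definition sigmaT :: "'a set \<Rightarrow> 'a set set \<Rightarrow> nat" where
  "sigmaT V E = Min {tree_stretch E T | T. spanning_tree V E T}"

text \<open>The grid P_{n_1} x ... x P_{n_d}, with ns = [n_1,...,n_d]; vertices are lists.\<close>
definition grid_V :: "nat list \<Rightarrow> nat list set" where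
  "grid_V ns = {xs. length xs = length ns \<and> (\<forall>i < length ns. 1 \<le> xs ! i \<and> xs ! i \<le> ns ! i)}"

definition grid_E :: "nat list \<Rightarrow> nat list set set" where
  "grid_E ns = {{x, y} | x y. x \<in> grid_V ns \<and> y \<in> grid_V ns \<and>
     (\<exists>i < length ns. (x ! i = y ! i + 1 \<or> y ! i = x ! i + 1) \<and>
        (\<forall>j < length ns. j \<noteq> i \<longrightarrow> x ! j = y ! j))}"

end

theory Submission
  imports Defs
begin


lemma walk_Nil[simp]: "\<not> walk S []" by (simp add: walk_def)
lemma walk_single[simp]: "walk S [x]" by (simp add: walk_def)
lemma walk_Cons2[simp]: "walk S (x # y # ys) \<longleftrightarrow> {x,y} \<in> S \<and> walk S (y # ys)"
proof
  assume h: "walk S (x # y # ys)"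
  have "0 < length (x # y # ys) - 1" by simp
  then have "{(x#y#ys) ! 0, (x#y#ys) ! (0 + 1)} \<in> S" using h unfolding walk_def by blast
  then have "{x,y} \<in> S" by simp
  moreover have "walk S (y # ys)" unfolding walk_def
  proof (intro conjI allI impI)
    fix i assume "i < length (y # ys) - 1"
    then have "Suc i < length (x # y # ys) - 1" by simp
    then have "{(x#y#ys) ! Suc i, (x#y#ys) ! (Suc i + 1)} \<in> S" using h unfolding walk_def by blast
    then show "{(y # ys) ! i, (y # ys) ! (i + 1)} \<in> S" by simp
  qed simp
  ultimately show "{x,y} \<in> S \<and> walk S (y # ys)" by blast
next
  assume h: "{x,y} \<in> S \<and> walk S (y # ys)"
  show "walk S (x # y # ys)" unfolding walk_def
  proof (intro conjI allI impI)
    fix i assume i: "i < length (x # y # ys) - 1"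
    show "{(x # y # ys) ! i, (x # y # ys) ! (i + 1)} \<in> S"
    proof (cases i)
      case 0 then show ?thesis using h by simp
    next
      case (Suc k)
      then have "k < length (y # ys) - 1" using i by simp
      then have "{(y # ys) ! k, (y # ys) ! (k + 1)} \<in> S" using h unfolding walk_def by blast
      then show ?thesis using Suc by simp
    qed
  qed simp
qed

lemma walk_Cons: "walk S (x # xs) \<longleftrightarrow> xs = [] \<or> ({x, hd xs} \<in> S \<and> walk S xs)"
  by (cases xs) auto

lemma walk_append_iff:
  "xs \<noteq> [] \<Longrightarrow> ys \<noteq> [] \<Longrightarrow> walk S (xs @ ys) \<longleftrightarrow> walk S xs \<and> walk S ys \<and> {last xs, hd ys} \<in> S"
proof (induction xs)
  case Nil then show ?case by simp
next
  case (Cons x xs)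
  show ?case
  proof (cases xs)
    case Nil
    then show ?thesis using Cons.prems by (cases ys) auto
  next
    case (Cons x' xs')
    then show ?thesis using Cons.IH Cons.prems by auto
  qed
qed

lemma walk_prefix: "walk S (xs @ ys) \<Longrightarrow> xs \<noteq> [] \<Longrightarrow> walk S xs"
  by (cases "ys = []") (auto simp: walk_append_iff)

lemma walk_suffix: "walk S (xs @ ys) \<Longrightarrow> ys \<noteq> [] \<Longrightarrow> walk S ys"
  by (cases "xs = []") (auto simp: walk_append_iff)

lemma walk_join:
  assumes "walk S xs" "walk S ys" "last xs = hd ys"
  shows "walk S (xs @ tl ys)"
proof (cases "tl ys = []")
  case True then show ?thesis using assms by simp
next
  case False
  have ne: "xs \<noteq> []" "ys \<noteq> []" using assms by auto
  have ys: "ys = hd ys # tl ys" using ne by simp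
  have "walk S (tl ys)" "{hd ys, hd (tl ys)} \<in> S"
    using assms(2) False ys by (metis walk_Cons)+
  then show ?thesis using assms ne False by (simp add: walk_append_iff)
qed

lemma join_hd: "xs \<noteq> [] \<Longrightarrow> hd (xs @ tl ys) = hd xs" by simp
lemma join_last: "xs \<noteq> [] \<Longrightarrow> ys \<noteq> [] \<Longrightarrow> last xs = hd ys \<Longrightarrow> last (xs @ tl ys) = last ys"
  by (cases ys) auto
lemma join_length: "ys \<noteq> [] \<Longrightarrow> length (xs @ tl ys) = length xs + length ys - 1"
  by (cases ys) auto

lemma walk_rev: "walk S xs \<Longrightarrow> walk S (rev xs)"
proof (induction xs rule: induct_list012)
  case (3 x y zs)
  then have "walk S (rev (y # zs))" "{x,y} \<in> S" by auto
  moreover have "{last (rev (y # zs)), x} = {x,y}" by auto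
  ultimately show ?case by (simp add: walk_append_iff[of "rev (y#zs)" "[x]", simplified])
qed auto

lemma walk_mono: "S \<subseteq> S' \<Longrightarrow> walk S xs \<Longrightarrow> walk S' xs"
  unfolding walk_def by blast

lemma walk_nth: "walk S xs \<Longrightarrow> Suc i < length xs \<Longrightarrow> {xs ! i, xs ! Suc i} \<in> S"
  unfolding walk_def by auto

lemma walk_distinct:
  "walk S xs \<Longrightarrow> \<exists>ys. walk S ys \<and> distinct ys \<and> hd ys = hd xs \<and> last ys = last xs"
proof (induction "length xs" arbitrary: xs rule: less_induct)
  case less
  show ?case
  proof (cases "distinct xs")
    case True then show ?thesis using less.prems by blast
  next
    case False
    then obtain as z bs cs where xs: "xs = as @ [z] @ bs @ [z] @ cs"
      using not_distinct_decomp by blast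
    have w1: "walk S (as @ [z])" using less.prems xs walk_prefix[of S "as @ [z]" "bs @ [z] @ cs"] by simp
    have w2: "walk S (z # cs)" using less.prems xs walk_suffix[of S "as @ [z] @ bs" "z # cs"] by simp
    have "walk S ((as @ [z]) @ tl (z # cs))" using walk_join[OF w1 w2] by simp
    then have w: "walk S (as @ z # cs)" by simp
    have "length (as @ z # cs) < length xs" using xs by simp
    then obtain ys where "walk S ys \<and> distinct ys \<and> hd ys = hd (as @ z # cs) \<and> last ys = last (as @ z # cs)"
      using less.hyps w by blast
    moreover have "hd (as @ z # cs) = hd xs" using xs by (cases as) auto
    moreover have "last (as @ z # cs) = last xs" using xs by (cases cs) auto
    ultimately show ?thesis by metis
  qed
qed

lemma walk_avoid: "walk S xs \<Longrightarrow> c \<notin> set xs \<Longrightarrow> c \<in> e \<Longrightarrow> walk (S - {e}) xs"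
proof (induction xs rule: induct_list012)
  case (3 x y zs)
  then show ?case by auto
qed auto

lemma walk_last_exit:
  assumes "walk S ws" "hd ws = c" "last ws \<noteq> c"
  shows "\<exists>y ws'. {c,y} \<in> S \<and> walk (S - {{c,y}}) ws' \<and> hd ws' = y \<and> last ws' = last ws"
proof -
  have "c \<in> set ws" using assms by (metis hd_in_set walk_Nil)
  then obtain p q where ws: "ws = p @ c # q" and cq: "c \<notin> set q"
    using split_list_last by metis
  have q: "q \<noteq> []" using assms ws by auto
  have w: "walk S (c # q)" using assms(1) ws walk_suffix by fastforce
  then have "{c, hd q} \<in> S" "walk S q" using q walk_Cons by metis+
  moreover have "walk (S - {{c, hd q}}) q" using walk_avoid[OF \<open>walk S q\<close> cq] by simp
  moreover have "last q = last ws" using ws q by simp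
  ultimately show ?thesis by blast
qed

lemma walk_acyclic:
  assumes ac: "acyclic_edges T" and e: "{a,b} \<in> T" and ab: "a \<noteq> b"
    and w: "walk (T - {{a,b}}) ws" "hd ws = a" "last ws = b"
  shows False
proof -
  obtain ys where ys: "walk (T - {{a,b}}) ys" "distinct ys" "hd ys = a" "last ys = b"
    using walk_distinct[OF w(1)] w by metis
  have "ys \<noteq> []" using ys by auto
  then obtain y1 ys' where ys1: "ys = y1 # ys'" by (cases ys) auto
  have "ys' \<noteq> []" using ys ys1 ab by auto
  then obtain y2 ys'' where ys2: "ys' = y2 # ys''" by (cases ys') auto
  have "ys'' \<noteq> []"
  proof
    assume "ys'' = []"
    then have "ys = [a,b]" using ys ys1 ys2 by simp
    then show False using ys(1) by simp
  qed
  then have "length ys \<ge> 3" using ys1 ys2 by (cases ys'') auto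
  moreover have "walk T ys" using walk_mono[OF _ ys(1)] by blast
  moreover have "{last ys, hd ys} \<in> T" using ys e by (simp add: insert_commute)
  ultimately show False using ac ys(2) unfolding acyclic_edges_def by blast
qed


definition dd :: "nat \<Rightarrow> nat \<Rightarrow> nat" where "dd a b = (a - b) + (b - a)"
definition L1 :: "nat \<Rightarrow> nat list \<Rightarrow> nat list \<Rightarrow> nat" where
  "L1 n x y = (\<Sum>i<n. dd (x!i) (y!i))"

lemma dd_tri: "dd a c \<le> dd a b + dd b c" unfolding dd_def by arith
lemma dd_sym: "dd a b = dd b a" unfolding dd_def by arith
lemma dd_0[simp]: "dd a a = 0" unfolding dd_def by simp

lemma L1_tri: "L1 n x z \<le> L1 n x y + L1 n y z"
  unfolding L1_def sum.distrib[symmetric] by (rule sum_mono) (rule dd_tri)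
lemma L1_sym: "L1 n x y = L1 n y x" unfolding L1_def by (simp add: dd_sym)
lemma L1_0[simp]: "L1 n x x = 0" unfolding L1_def by simp

lemma grid_E_iff:
  "{u,v} \<in> grid_E ns \<longleftrightarrow> u \<in> grid_V ns \<and> v \<in> grid_V ns \<and>
     (\<exists>i<length ns. (u!i = v!i+1 \<or> v!i = u!i+1) \<and> (\<forall>j<length ns. j\<noteq>i \<longrightarrow> u!j = v!j))"
proof
  assume "{u,v} \<in> grid_E ns"
  then obtain x y where xy: "{u,v} = {x,y}" "x \<in> grid_V ns" "y \<in> grid_V ns"
    "\<exists>i<length ns. (x ! i = y ! i + 1 \<or> y ! i = x ! i + 1) \<and> (\<forall>j<length ns. j \<noteq> i \<longrightarrow> x ! j = y ! j)"
    unfolding grid_E_def by blast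
  from xy(1) have "(u = x \<and> v = y) \<or> (u = y \<and> v = x)" by (auto simp: doubleton_eq_iff)
  then show "u \<in> grid_V ns \<and> v \<in> grid_V ns \<and>
     (\<exists>i<length ns. (u!i = v!i+1 \<or> v!i = u!i+1) \<and> (\<forall>j<length ns. j\<noteq>i \<longrightarrow> u!j = v!j))"
  proof
    assume "u = x \<and> v = y" then show ?thesis using xy by blast
  next
    assume h: "u = y \<and> v = x"
    from xy(4) obtain i where "i<length ns" "(x ! i = y ! i + 1 \<or> y ! i = x ! i + 1)"
      "(\<forall>j<length ns. j \<noteq> i \<longrightarrow> x ! j = y ! j)" by blast
    then show ?thesis using h xy by (metis)
  qed
next
  assume "u \<in> grid_V ns \<and> v \<in> grid_V ns \<and>
     (\<exists>i<length ns. (u!i = v!i+1 \<or> v!i = u!i+1) \<and> (\<forall>j<length ns. j\<noteq>i \<longrightarrow> u!j = v!j))"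
  then show "{u,v} \<in> grid_E ns" unfolding grid_E_def by blast
qed

lemma grid_E_elem: "e \<in> grid_E ns \<Longrightarrow> \<exists>u v. e = {u,v}"
  unfolding grid_E_def by blast

lemma grid_E_ne: "{u,v} \<in> grid_E ns \<Longrightarrow> u \<noteq> v"
  unfolding grid_E_iff by force

lemma grid_E_L1:
  assumes "{u,v} \<in> grid_E ns" shows "L1 (length ns) u v = 1"
proof -
  obtain i where i: "i < length ns" "u!i = v!i+1 \<or> v!i = u!i+1" "\<forall>j<length ns. j\<noteq>i \<longrightarrow> u!j = v!j"
    using assms unfolding grid_E_iff by blast
  have "L1 (length ns) u v = dd (u!i) (v!i) + (\<Sum>k\<in>{..<length ns} - {i}. dd (u!k) (v!k))"
    unfolding L1_def using i(1) by (simp add: sum.remove)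
  also have "(\<Sum>k\<in>{..<length ns} - {i}. dd (u!k) (v!k)) = 0"
    using i(3) by (intro sum.neutral) auto
  finally show ?thesis using i(2) unfolding dd_def by auto
qed

lemma walk_L1:
  assumes "walk S xs" "S \<subseteq> grid_E ns" "i \<le> j" "j < length xs"
  shows "L1 (length ns) (xs!i) (xs!j) \<le> j - i"
  using assms(3,4)
proof (induction j)
  case 0 then show ?case by simp
next
  case (Suc j)
  show ?case
  proof (cases "i = Suc j")
    case True then show ?thesis by simp
  next
    case False
    then have ij: "i \<le> j" using Suc by simp
    have "{xs!j, xs!Suc j} \<in> grid_E ns" using walk_nth[OF assms(1)] Suc.prems assms(2) by blast
    then have "L1 (length ns) (xs!j) (xs!Suc j) = 1" by (rule grid_E_L1)
    moreover have "L1 (length ns) (xs!i) (xs!j) \<le> j - i" using Suc ij by simp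
    ultimately show ?thesis using L1_tri[of "length ns" "xs!i" "xs!Suc j" "xs!j"] ij by simp
  qed
qed

lemma walk_in_V:
  "walk S xs \<Longrightarrow> S \<subseteq> grid_E ns \<Longrightarrow> hd xs \<in> grid_V ns \<Longrightarrow> set xs \<subseteq> grid_V ns"
proof (induction xs rule: induct_list012)
  case (3 x y zs)
  then have "{x,y} \<in> grid_E ns" by auto
  then have "y \<in> grid_V ns" unfolding grid_E_iff by blast
  then show ?case using 3 by auto
qed auto

lemma finite_grid_V: "finite (grid_V ns)"
proof -
  have "grid_V ns \<subseteq> {xs. set xs \<subseteq> {0..sum_list ns} \<and> length xs = length ns}"
  proof
    fix xs assume "xs \<in> grid_V ns"
    then have h: "length xs = length ns" "\<forall>i<length ns. xs!i \<le> ns!i" unfolding grid_V_def by auto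
    have "\<forall>x\<in>set xs. x \<le> sum_list ns"
    proof
      fix x assume "x \<in> set xs"
      then obtain i where "i < length xs" "x = xs!i" by (metis in_set_conv_nth)
      then show "x \<le> sum_list ns" using h elem_le_sum_list[of i ns] by force
    qed
    then show "xs \<in> {xs. set xs \<subseteq> {0..sum_list ns} \<and> length xs = length ns}" using h by auto
  qed
  then show ?thesis using finite_lists_length_eq[of "{0..sum_list ns}"] finite_subset by blast
qed

lemma finite_grid_E: "finite (grid_E ns)"
proof -
  have "grid_E ns \<subseteq> Pow (grid_V ns)" unfolding grid_E_def by auto
  then show ?thesis using finite_grid_V finite_subset by blast
qed

lemma IVT_nat: "P s \<noteq> P t \<Longrightarrow> s < t \<Longrightarrow> \<exists>k. s \<le> k \<and> k < t \<and> P k \<noteq> P (Suc k)"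
proof (induction t)
  case 0 then show ?case by simp
next
  case (Suc t)
  show ?case
  proof (cases "P t = P (Suc t)")
    case True
    then have "s < t" using Suc.prems by (metis less_SucE)
    then show ?thesis using Suc True by (metis less_SucI)
  next
    case False
    then show ?thesis using Suc.prems by (intro exI[of _ t]) auto
  qed
qed

lemma far_coord: "1 \<le> (c::nat) \<Longrightarrow> c \<le> n \<Longrightarrow> n div 2 \<le> dd (if 2 * c \<le> n + 1 then n else 1) c"
proof -
  assume h: "1 \<le> c" "c \<le> n"
  have a: "2*(n div 2) \<le> n" "n \<le> 2*(n div 2) + 1" by auto
  show ?thesis
  proof (cases "2 * c \<le> n + 1")
    case True then show ?thesis using a h unfolding dd_def by simp
  next
    case False then show ?thesis using a h unfolding dd_def by simp
  qed
qed


locale grid =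
  fixes ns :: "nat list"
  assumes len: "length ns \<ge> 1" and srt: "sorted ns" and ge2: "\<forall>i < length ns. ns ! i \<ge> 2"
begin

definition R :: nat where "R = (\<Sum>i<length ns - 1. ns ! i div 2)"

definition sig :: "nat list \<Rightarrow> nat list" where
  "sig c = map (\<lambda>i. if 2 * (c!i) \<le> ns!i + 1 then ns!i else 1) [0..<length ns]"

lemma sig_len[simp]: "length (sig c) = length ns" by (simp add: sig_def)
lemma sig_nth: "i < length ns \<Longrightarrow> sig c ! i = (if 2 * (c!i) \<le> ns!i + 1 then ns!i else 1)"
  by (simp add: sig_def)

lemma sig_V: "sig c \<in> grid_V ns"
  using ge2 unfolding grid_V_def by (auto simp: sig_nth)

lemma sig_far: assumes "c \<in> grid_V ns" "i < length ns"
  shows "dd (sig c ! i) (c!i) \<ge> ns!i div 2"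
proof -
  have "1 \<le> c!i" "c!i \<le> ns!i" using assms unfolding grid_V_def by auto
  then show ?thesis unfolding sig_nth[OF assms(2)] by (rule far_coord)
qed

lemma sig_ne: assumes "c \<in> grid_V ns" shows "sig c \<noteq> c"
proof
  assume h: "sig c = c"
  have m: "length ns - 1 < length ns" using len by simp
  have "dd (sig c ! (length ns - 1)) (c ! (length ns - 1)) \<ge> ns!(length ns - 1) div 2"
    using sig_far[OF assms m] .
  moreover have "ns!(length ns - 1) div 2 \<ge> 1"
  proof -
    have "2 \<le> ns!(length ns - 1)" using ge2 m by blast
    then show ?thesis by (simp add: Suc_le_eq div_greater_zero_iff)
  qed
  ultimately show False using h by simp
qed

lemma far_line:
  assumes j: "j < length ns" and far: "\<forall>i<length ns. i \<noteq> j \<longrightarrow> dd (x!i) (c!i) \<ge> ns!i div 2"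
  shows "L1 (length ns) x c \<ge> R"
proof -
  let ?d = "length ns" and ?m = "length ns - 1"
  define f where "f i = ns!i div 2" for i
  have "(\<Sum>i\<in>{..<?d} - {j}. f i) \<le> (\<Sum>i\<in>{..<?d} - {j}. dd (x!i) (c!i))"
    using far unfolding f_def by (intro sum_mono) auto
  also have "\<dots> \<le> (\<Sum>i\<in>{..<?d}. dd (x!i) (c!i))"
    by (intro sum_mono2) auto
  also have "\<dots> = L1 ?d x c" by (simp add: L1_def)
  finally have A: "(\<Sum>i\<in>{..<?d} - {j}. f i) \<le> L1 ?d x c" .
  have dm: "?d = Suc ?m" using len by simp
  have "R \<le> (\<Sum>i\<in>{..<?d} - {j}. f i)"
  proof (cases "j = ?m")
    case True
    then have "{..<?d} - {j} = {..<?m}" using dm by auto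
    then show ?thesis unfolding R_def f_def by simp
  next
    case False
    then have jm: "j < ?m" using j by simp
    have s1: "(\<Sum>i<?m. f i) = f j + (\<Sum>i\<in>{..<?m} - {j}. f i)"
      using jm by (simp add: sum.remove)
    have "{..<?d} - {j} = insert ?m ({..<?m} - {j})" using dm jm by auto
    then have s2: "(\<Sum>i\<in>{..<?d} - {j}. f i) = f ?m + (\<Sum>i\<in>{..<?m} - {j}. f i)"
      by simp
    have "ns!j \<le> ns!?m" using srt jm dm by (intro sorted_nth_mono) auto
    then have "f j \<le> f ?m" unfolding f_def by (rule div_le_mono)
    then show ?thesis using s1 s2 unfolding R_def f_def by simp
  qed
  then show ?thesis using A by simp
qed

definition side :: "nat list set set \<Rightarrow> nat list \<Rightarrow> nat list \<Rightarrow> nat list set" where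
  "side T c y = {x. \<exists>ws. walk (T - {{c,y}}) ws \<and> hd ws = y \<and> last ws = x}"

lemma side_V:
  assumes "T \<subseteq> grid_E ns" "y \<in> grid_V ns" shows "side T c y \<subseteq> grid_V ns"
proof
  fix x assume "x \<in> side T c y"
  then obtain ws where ws: "walk (T - {{c,y}}) ws" "hd ws = y" "last ws = x" unfolding side_def by blast
  have "set ws \<subseteq> grid_V ns" using walk_in_V[OF ws(1)] assms ws(2) by blast
  moreover have "ws \<noteq> []" using ws by auto
  ultimately show "x \<in> grid_V ns" using ws(3) by auto
qed

lemma tdist_ge:
  assumes conn: "connected_on (grid_V ns) T" and uv: "u \<in> grid_V ns" "v \<in> grid_V ns"
    and all: "\<forall>ws. walk T ws \<and> hd ws = u \<and> last ws = v \<longrightarrow> length ws \<ge> K + 1"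
  shows "tdist T u v \<ge> K"
proof -
  obtain ws where ws: "walk T ws" "hd ws = u" "last ws = v"
    using conn uv unfolding connected_on_def by blast
  let ?P = "\<lambda>k. \<exists>xs. walk T xs \<and> hd xs = u \<and> last xs = v \<and> length xs = k + 1"
  have "?P (length ws - 1)" using ws by (intro exI[of _ ws]) (cases ws; auto)
  then have "?P (LEAST k. ?P k)" by (rule LeastI)
  then obtain xs where "walk T xs" "hd xs = u" "last xs = v" "length xs = tdist T u v + 1"
    unfolding tdist_def by blast
  then show ?thesis using all by fastforce
qed

lemma lower_edge:
  assumes st: "spanning_tree (grid_V ns) (grid_E ns) T"
  shows "\<exists>u v. {u,v} \<in> grid_E ns \<and>
           (\<forall>ws. walk T ws \<and> hd ws = u \<and> last ws = v \<longrightarrow> length ws \<ge> 2*R + 2)"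
proof -
  let ?V = "grid_V ns" and ?E = "grid_E ns" and ?d = "length ns"
  have TE: "T \<subseteq> ?E" and conn: "connected_on ?V T" and ac: "acyclic_edges T"
    using st unfolding spanning_tree_def by auto
  have ex: "\<exists>y. {c,y} \<in> T \<and> sig c \<in> side T c y" if c: "c \<in> ?V" for c
  proof -
    obtain ws where ws: "walk T ws" "hd ws = c" "last ws = sig c"
      using conn c sig_V unfolding connected_on_def by blast
    have "last ws \<noteq> c" using ws(3) sig_ne[OF c] by simp
    then obtain y ws' where y: "{c,y} \<in> T" "walk (T - {{c,y}}) ws'" "hd ws' = y" "last ws' = last ws"
      using walk_last_exit[OF ws(1,2)] by blast
    have "sig c \<in> side T c y" unfolding side_def using y ws(3) by (intro CollectI exI[of _ ws']) simp
    then show ?thesis using y(1) by blast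
  qed
  define M where "M = {(c,y). c \<in> ?V \<and> {c,y} \<in> T \<and> sig c \<in> side T c y}"
  have "replicate ?d 1 \<in> ?V" using ge2 unfolding grid_V_def by auto
  then obtain y0 where "(replicate ?d 1, y0) \<in> M" using ex unfolding M_def by blast
  then obtain p where pM: "p \<in> M" and pmin: "\<forall>q. q \<in> M \<longrightarrow> card (side T (fst p) (snd p)) \<le> card (side T (fst q) (snd q))"
    using ex_has_least_nat[of "\<lambda>p. p \<in> M" _ "\<lambda>p. card (side T (fst p) (snd p))"] by blast
  obtain a b where p: "p = (a,b)" by (cases p)
  have aV: "a \<in> ?V" and abT: "{a,b} \<in> T" and sa: "sig a \<in> side T a b" using pM p unfolding M_def by auto
  have abE: "{a,b} \<in> ?E" using abT TE by blast
  have ab: "a \<noteq> b" using grid_E_ne[OF abE] .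
  have bV: "b \<in> ?V" using abE unfolding grid_E_iff by blast
  obtain z where bzT: "{b,z} \<in> T" and sbz: "sig b \<in> side T b z" using ex[OF bV] by blast
  have bzE: "{b,z} \<in> ?E" using bzT TE by blast
  have bz: "b \<noteq> z" using grid_E_ne[OF bzE] .
  have zV: "z \<in> ?V" using bzE unfolding grid_E_iff by blast
  have b_notin: "b \<notin> side T b z"
  proof
    assume "b \<in> side T b z"
    then obtain ws where ws: "walk (T - {{b,z}}) ws" "hd ws = z" "last ws = b" unfolding side_def by blast
    have "{z,b} = {b,z}" by auto
    then show False using walk_acyclic[OF ac, of z b ws] ws bzT bz by auto
  qed
  have za: "z = a"
  proof (rule ccontr)
    assume za: "z \<noteq> a"
    have sub: "side T b z \<subseteq> side T a b"
    proof
      fix x assume "x \<in> side T b z"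
      then obtain ws where ws: "walk (T - {{b,z}}) ws" "hd ws = z" "last ws = x" unfolding side_def by blast
      have bws: "b \<notin> set ws"
      proof
        assume "b \<in> set ws"
        then obtain p q where pq: "ws = p @ b # q" by (metis split_list)
        have w: "walk (T - {{b,z}}) (p @ [b])" using walk_prefix[of _ "p @ [b]" q] ws pq by simp
        have "hd (p @ [b]) = z" using pq ws bz by (cases p) auto
        moreover have "{z,b} = {b,z}" by auto
        ultimately show False using walk_acyclic[OF ac, of z b "p @ [b]"] w bzT bz by auto
      qed
      have w2: "walk (T - {{b,z}} - {{a,b}}) ws" using walk_avoid[OF ws(1) bws] by simp
      have w3: "walk (T - {{a,b}}) ws" using walk_mono[OF _ w2] by blast
      have "{b,z} \<noteq> {a,b}" using za ab by (auto simp: doubleton_eq_iff)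
      then have "{b, hd ws} \<in> T - {{a,b}}" using ws bzT by simp
      then have "walk (T - {{a,b}}) (b # ws)" using w3 walk_Cons by metis
      moreover have "ws \<noteq> []" using ws by auto
      ultimately show "x \<in> side T a b" unfolding side_def using ws by (intro CollectI exI[of _ "b # ws"]) auto
    qed
    have "b \<in> side T a b" unfolding side_def by (intro CollectI exI[of _ "[b]"]) auto
    then have "side T b z \<subset> side T a b" using sub b_notin by blast
    moreover have "finite (side T a b)"
      using side_V[OF TE bV] finite_grid_V finite_subset by blast
    ultimately have "card (side T b z) < card (side T a b)" using psubset_card_mono by blast
    moreover have "(b,z) \<in> M" using bV bzT sbz unfolding M_def by auto
    moreover have "card (side T a b) \<le> card (side T b z)"
      using pmin[rule_format, OF \<open>(b,z) \<in> M\<close>] p by simp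
    ultimately show False by simp
  qed
  define A where "A = side T b a"
  have sbA: "sig b \<in> A" using sbz za unfolding A_def by simp
  have baab: "{b,a} = {a,b}" by auto
  have saA: "sig a \<notin> A"
  proof
    assume "sig a \<in> A"
    then obtain w2 where w2: "walk (T - {{a,b}}) w2" "hd w2 = a" "last w2 = sig a"
      unfolding A_def side_def baab by blast
    obtain w1 where w1: "walk (T - {{a,b}}) w1" "hd w1 = b" "last w1 = sig a"
      using sa unfolding side_def by blast
    have r: "walk (T - {{a,b}}) (rev w1)" "hd (rev w1) = sig a" "last (rev w1) = b" "rev w1 \<noteq> []"
      using w1 walk_rev by (auto simp: hd_rev last_rev)
    have ne: "w2 \<noteq> []" using w2 by auto
    have "walk (T - {{a,b}}) (w2 @ tl (rev w1))" using walk_join[OF w2(1) r(1)] w2 r by simp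
    moreover have "hd (w2 @ tl (rev w1)) = a" using ne w2 by simp
    moreover have "last (w2 @ tl (rev w1)) = b" using join_last[OF ne r(4)] w2 r by simp
    ultimately show False using walk_acyclic[OF ac abT ab] by blast
  qed
  obtain j where j: "j < ?d" "a!j = b!j+1 \<or> b!j = a!j+1" "\<forall>i<?d. i\<noteq>j \<longrightarrow> a!i = b!i"
    using abE unfolding grid_E_iff by blast
  define pt where "pt t = (sig a)[j := t]" for t
  have pt_nth: "pt t ! i = (if i = j then t else sig a ! i)" if "i < ?d" for t i
    using that j unfolding pt_def by simp
  have sab: "sig b ! i = sig a ! i" if "i < ?d" "i \<noteq> j" for i
    using that j by (simp add: sig_nth)
  have pt_a: "pt (sig a ! j) = sig a" unfolding pt_def by simp
  have pt_b: "pt (sig b ! j) = sig b"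
    unfolding pt_def
  proof (rule nth_equalityI)
    fix i assume "i < length ((sig a)[j := sig b ! j])"
    then show "(sig a)[j := sig b ! j] ! i = sig b ! i" by (cases "i = j") (auto simp: sab)
  qed simp
  have pt_V: "pt t \<in> ?V" if "1 \<le> t" "t \<le> ns!j" for t
    using sig_V that j unfolding grid_V_def pt_def by (auto simp: nth_list_update)
  have far_a: "L1 ?d (pt t) a \<ge> R" for t
    using j(1) by (intro far_line) (auto simp: pt_nth sig_far[OF aV])
  have far_b: "L1 ?d (pt t) b \<ge> R" for t
  proof (rule far_line[OF j(1)], intro allI impI)
    fix i assume "i < ?d" "i \<noteq> j"
    then show "ns ! i div 2 \<le> dd (pt t ! i) (b ! i)"
      using sig_far[OF bV, of i] by (simp add: pt_nth sab)
  qed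
  have cross: "\<forall>ws. walk T ws \<and> hd ws = u \<and> last ws = v \<longrightarrow> length ws \<ge> 2*R + 2"
    if uA: "u \<in> A" and vA: "v \<notin> A" and fu: "L1 ?d u a \<ge> R" "L1 ?d u b \<ge> R"
      and fv: "L1 ?d v a \<ge> R" "L1 ?d v b \<ge> R" for u v
  proof (intro allI impI)
    fix ws assume ws: "walk T ws \<and> hd ws = u \<and> last ws = v"
    have ne: "ws \<noteq> []" using ws by auto
    have uv: "u \<noteq> v" using uA vA by auto
    have l2: "0 < length ws - 1"
    proof (rule ccontr)
      assume "\<not> 0 < length ws - 1"
      then have "length ws = 1" using ne by (cases ws) auto
      then have "hd ws = last ws" by (cases ws) auto
      then show False using ws uv by simp
    qed
    have "(ws!0 \<in> A) \<noteq> (ws!(length ws - 1) \<in> A)"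
      using ws uA vA ne by (simp add: hd_conv_nth last_conv_nth)
    then obtain i where i: "i < length ws - 1" "(ws!i \<in> A) \<noteq> (ws!Suc i \<in> A)"
      using IVT_nat[of "\<lambda>i. ws!i \<in> A" 0 "length ws - 1"] l2 by auto
    have eT: "{ws!i, ws!Suc i} \<in> T" using walk_nth ws i by fastforce
    have eq: "{ws!i, ws!Suc i} = {a,b}"
    proof (rule ccontr)
      assume neq: "{ws!i, ws!Suc i} \<noteq> {a,b}"
      have sym: "y \<in> A" if xy: "{x,y} = {ws!i, ws!Suc i}" and xA: "x \<in> A" for x y
      proof -
        obtain w where w: "walk (T - {{a,b}}) w" "hd w = a" "last w = x"
          using xA unfolding A_def side_def baab by blast
        have exy: "{x,y} \<in> T - {{a,b}}" using eT neq xy by simp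
        have "w \<noteq> []" using w by auto
        then have "walk (T - {{a,b}}) (w @ [y])" using walk_append_iff[of w "[y]"] w exy by simp
        moreover have "w \<noteq> []" using w by auto
        ultimately show "y \<in> A" unfolding A_def side_def baab using w
          by (intro CollectI exI[of _ "w @ [y]"]) auto
      qed
      show False
      proof (cases "ws!i \<in> A")
        case True
        then have "ws!Suc i \<in> A" using sym[of "ws!i" "ws!Suc i"] by simp
        then show ?thesis using True i(2) by simp
      next
        case False
        then have "ws!Suc i \<in> A" using i(2) by simp
        then have "ws!i \<in> A" using sym[of "ws!Suc i" "ws!i"] by (simp add: insert_commute)
        then show ?thesis using False by simp
      qed
    qed
    have x1: "ws!i = a \<or> ws!i = b" "ws!Suc i = a \<or> ws!Suc i = b"
      using eq by (auto simp: doubleton_eq_iff)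
    have "L1 ?d (ws!0) (ws!i) \<le> i - 0" using walk_L1[of T ws ns 0 i] ws TE i by simp
    moreover have "ws!0 = u" using ws ne by (simp add: hd_conv_nth)
    ultimately have "L1 ?d u (ws!i) \<le> i" by simp
    moreover have "L1 ?d u (ws!i) \<ge> R" using x1(1) fu by auto
    ultimately have iR: "R \<le> i" by simp
    have "L1 ?d (ws!Suc i) (ws!(length ws - 1)) \<le> (length ws - 1) - Suc i"
      using walk_L1[of T ws ns "Suc i" "length ws - 1"] ws TE i by simp
    moreover have "ws!(length ws - 1) = v" using ws ne by (simp add: last_conv_nth)
    ultimately have "L1 ?d (ws!Suc i) v \<le> (length ws - 1) - Suc i" by simp
    moreover have "L1 ?d (ws!Suc i) v \<ge> R" using x1(2) fv L1_sym by metis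
    ultimately have "R \<le> (length ws - 1) - Suc i" by simp
    then show "length ws \<ge> 2*R + 2" using iR i(1) by linarith
  qed
  have rng: "1 \<le> sig a ! j" "sig a ! j \<le> ns!j" "1 \<le> sig b ! j" "sig b ! j \<le> ns!j"
    using sig_V[of a] sig_V[of b] j(1) unfolding grid_V_def by auto
  have neqA: "(pt (sig b ! j) \<in> A) \<noteq> (pt (sig a ! j) \<in> A)" using pt_a pt_b sbA saA by simp
  then have "\<exists>k. min (sig b ! j) (sig a ! j) \<le> k \<and> k < max (sig b ! j) (sig a ! j) \<and>
                (pt k \<in> A) \<noteq> (pt (Suc k) \<in> A)"
  proof (cases "sig b ! j < sig a ! j")
    case True
    then show ?thesis using IVT_nat[of "\<lambda>t. pt t \<in> A" "sig b ! j" "sig a ! j"] neqA by auto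
  next
    case False
    then have "sig a ! j < sig b ! j" using neqA by (cases "sig a ! j = sig b ! j") auto
    then show ?thesis using IVT_nat[of "\<lambda>t. pt t \<in> A" "sig a ! j" "sig b ! j"] neqA by fastforce
  qed
  then obtain k where k0: "min (sig b ! j) (sig a ! j) \<le> k" "k < max (sig b ! j) (sig a ! j)"
     "(pt k \<in> A) \<noteq> (pt (Suc k) \<in> A)" by blast
  have k: "1 \<le> k" "Suc k \<le> ns!j" "(pt k \<in> A) \<noteq> (pt (Suc k) \<in> A)"
    using rng k0 by (simp_all add: min_def max_def split: if_splits)
  have ptE: "{pt k, pt (Suc k)} \<in> ?E"
    unfolding grid_E_iff using pt_V k j(1)
    by (intro conjI exI[of _ j]) (auto simp: pt_nth)
  show ?thesis
  proof (cases "pt k \<in> A")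
    case True
    then show ?thesis using cross[of "pt k" "pt (Suc k)"] k(3) far_a far_b ptE by blast
  next
    case False
    then have "pt (Suc k) \<in> A" using k(3) by simp
    moreover have "{pt (Suc k), pt k} \<in> ?E" using ptE by (simp add: insert_commute)
    ultimately show ?thesis using cross[of "pt (Suc k)" "pt k"] False far_a far_b by blast
  qed
qed

end


context grid
begin

abbreviation mm where "mm \<equiv> length ns - 1"

lemma dm: "mm < length ns" using len by simp

definition cen :: "nat \<Rightarrow> nat" where "cen i = (ns!i + 1) div 2"
definition off :: "nat list \<Rightarrow> bool" where "off x \<longleftrightarrow> (\<exists>i<mm. x!i \<noteq> cen i)"
definition fi :: "nat list \<Rightarrow> nat" where "fi x = (LEAST i. i < mm \<and> x!i \<noteq> cen i)"
definition par :: "nat list \<Rightarrow> nat list" where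
  "par x = (if off x then x[fi x := (if x!(fi x) < cen (fi x) then x!(fi x) + 1 else x!(fi x) - 1)]
            else x[mm := x!mm - 1])"
definition root :: "nat list" where "root = map (\<lambda>i. if i < mm then cen i else 1) [0..<length ns]"
definition anc :: "nat list \<Rightarrow> nat list" where "anc x = map (\<lambda>i. if i < mm then cen i else x!i) [0..<length ns]"
definition DD :: "nat list \<Rightarrow> nat" where "DD x = (\<Sum>i<mm. dd (x!i) (cen i))"
definition ht :: "nat list \<Rightarrow> nat" where "ht x = DD x + (x!mm - 1)"
definition T0 :: "nat list set set" where "T0 = {{x, par x} | x. x \<in> grid_V ns \<and> x \<noteq> root}"

lemma cen_rng: "i < length ns \<Longrightarrow> 1 \<le> cen i \<and> cen i \<le> ns!i"
  using ge2 unfolding cen_def by fastforce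

lemma dd_cen: "i < length ns \<Longrightarrow> 1 \<le> t \<Longrightarrow> t \<le> ns!i \<Longrightarrow> dd t (cen i) \<le> ns!i div 2"
  unfolding cen_def dd_def by auto

lemma root_V: "root \<in> grid_V ns"
  unfolding grid_V_def root_def using cen_rng ge2 by auto

lemma anc_V: "x \<in> grid_V ns \<Longrightarrow> anc x \<in> grid_V ns"
  unfolding grid_V_def anc_def using cen_rng by auto

lemma anc_nth: "i < length ns \<Longrightarrow> anc x ! i = (if i < mm then cen i else x!i)"
  unfolding anc_def by simp

lemma anc_len[simp]: "length (anc x) = length ns" unfolding anc_def by simp
lemma root_len[simp]: "length root = length ns" unfolding root_def by simp

lemma root_nth: "i < length ns \<Longrightarrow> root ! i = (if i < mm then cen i else 1)"
  unfolding root_def by simp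

lemma not_off_anc: "x \<in> grid_V ns \<Longrightarrow> \<not> off x \<Longrightarrow> anc x = x"
proof (intro nth_equalityI)
  assume x: "x \<in> grid_V ns" and o: "\<not> off x"
  show "length (anc x) = length x" using x unfolding grid_V_def by simp
  fix i assume "i < length (anc x)"
  then show "anc x ! i = x ! i" using o unfolding off_def by (auto simp: anc_nth)
qed

lemma root_not_off: "\<not> off root"
  unfolding off_def using dm by (auto simp: root_nth)

lemma anc_not_off: "\<not> off (anc x)"
  unfolding off_def using dm by (auto simp: anc_nth)

lemma fi_props: assumes "off x" shows "fi x < mm" "x!(fi x) \<noteq> cen (fi x)"
proof -
  obtain i where "i < mm" "x!i \<noteq> cen i" using assms unfolding off_def by blast
  then have "fi x < mm \<and> x!(fi x) \<noteq> cen (fi x)" unfolding fi_def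
    using LeastI[of "\<lambda>i. i < mm \<and> x!i \<noteq> cen i" i] by blast
  then show "fi x < mm" "x!(fi x) \<noteq> cen (fi x)" by auto
qed

lemma not_off_last: assumes "x \<in> grid_V ns" "\<not> off x" "x \<noteq> root" shows "x!mm \<ge> 2"
proof (rule ccontr)
  assume "\<not> x!mm \<ge> 2"
  moreover have "x!mm \<ge> 1" using assms(1) dm unfolding grid_V_def by auto
  ultimately have "x!mm = 1" by simp
  have "x = root"
  proof (rule nth_equalityI)
    show "length x = length root" using assms(1) unfolding grid_V_def by simp
    fix i assume "i < length x"
    then have il: "i < length ns" using assms(1) unfolding grid_V_def by simp
    show "x ! i = root ! i"
    proof (cases "i < mm")
      case True then show ?thesis using assms(2) il unfolding off_def by (simp add: root_nth)
    next
      case False then have "i = mm" using il by simp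
      then show ?thesis using \<open>x!mm = 1\<close> il by (simp add: root_nth)
    qed
  qed
  then show False using assms(3) by simp
qed

lemma par_off:
  assumes x: "x \<in> grid_V ns" and o: "off x"
  shows "par x \<in> grid_V ns" "{x, par x} \<in> grid_E ns" "DD (par x) + 1 = DD x"
        "par x ! mm = x ! mm" "anc (par x) = anc x"
proof -
  let ?i = "fi x"
  have i: "?i < mm" "x!?i \<noteq> cen ?i" using fi_props[OF o] by auto
  have il: "?i < length ns" using i dm by simp
  define t where "t = (if x!?i < cen ?i then x!?i + 1 else x!?i - 1)"
  have p: "par x = x[?i := t]" unfolding par_def t_def using o by simp
  have xr: "1 \<le> x!?i" "x!?i \<le> ns!?i" "length x = length ns" using x il unfolding grid_V_def by auto
  have cr: "1 \<le> cen ?i" "cen ?i \<le> ns!?i" using cen_rng[OF il] by auto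
  have tr: "1 \<le> t" "t \<le> ns!?i" using xr cr i unfolding t_def by auto
  show pV: "par x \<in> grid_V ns" using x tr il unfolding p grid_V_def by (auto simp: nth_list_update)
  have step: "x!?i = t + 1 \<or> t = x!?i + 1" using i(2) xr cr unfolding t_def by auto
  show "{x, par x} \<in> grid_E ns" unfolding grid_E_iff
    using x pV il step xr by (intro conjI exI[of _ ?i]) (auto simp: p)
  have dt: "dd t (cen ?i) + 1 = dd (x!?i) (cen ?i)" using i(2) unfolding t_def dd_def by auto
  have "DD (par x) = dd t (cen ?i) + (\<Sum>k\<in>{..<mm} - {?i}. dd (par x ! k) (cen k))"
    unfolding DD_def using i(1) xr il by (simp add: sum.remove p)
  also have "(\<Sum>k\<in>{..<mm} - {?i}. dd (par x ! k) (cen k)) = (\<Sum>k\<in>{..<mm} - {?i}. dd (x ! k) (cen k))"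
    unfolding p by (intro sum.cong) auto
  finally have "DD (par x) + 1 = dd (x!?i) (cen ?i) + (\<Sum>k\<in>{..<mm} - {?i}. dd (x ! k) (cen k))"
    using dt by simp
  also have "\<dots> = DD x" unfolding DD_def using i(1) by (simp add: sum.remove)
  finally show "DD (par x) + 1 = DD x" .
  show "par x ! mm = x ! mm" unfolding p using i by simp
  show "anc (par x) = anc x" unfolding anc_def p using i by (intro map_cong) auto
qed

lemma par_not_off:
  assumes x: "x \<in> grid_V ns" and o: "\<not> off x" and r: "x \<noteq> root"
  shows "par x \<in> grid_V ns" "{x, par x} \<in> grid_E ns" "par x = x[mm := x!mm - 1]" "x!mm = par x ! mm + 1"
        "DD (par x) = DD x"
proof -
  have l2: "x!mm \<ge> 2" using not_off_last[OF x o r] .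
  have xr: "x!mm \<le> ns!mm" "length x = length ns" using x dm unfolding grid_V_def by auto
  show p: "par x = x[mm := x!mm - 1]" unfolding par_def using o by simp
  have xall: "\<forall>i<length ns. 1 \<le> x!i \<and> x!i \<le> ns!i" using x unfolding grid_V_def by simp
  show pV: "par x \<in> grid_V ns" unfolding grid_V_def
  proof (intro CollectI conjI allI impI)
    show "length (par x) = length ns" using xr p by simp
    fix i assume il: "i < length ns"
    show "1 \<le> par x ! i" "par x ! i \<le> ns ! i"
    proof -
      have "1 \<le> x ! i" "x ! i \<le> ns ! i" using xall il by auto
      moreover have "par x ! i = (if i = mm then x!mm - 1 else x!i)" unfolding p using il xr by simp
      moreover have "x!mm - 1 \<le> ns!mm" using xr(1) by (rule le_trans[OF diff_le_self])
      moreover have "1 \<le> x!mm - 1" using l2 by simp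
      ultimately show "1 \<le> par x ! i" "par x ! i \<le> ns ! i"
        by (auto split: if_splits)
    qed
  qed
  have mmL: "mm < length x" using xr dm by simp
  show st: "x!mm = par x ! mm + 1" unfolding p using l2 mmL by simp
  have oth: "\<forall>j<length ns. j \<noteq> mm \<longrightarrow> x!j = par x!j" unfolding p by simp
  show "{x, par x} \<in> grid_E ns" unfolding grid_E_iff
    using x pV st oth dm by metis
  show "DD (par x) = DD x" unfolding DD_def p by (intro sum.cong) auto
qed

lemma ht_par: assumes x: "x \<in> grid_V ns" and r: "x \<noteq> root" shows "ht (par x) + 1 = ht x"
proof (cases "off x")
  case True
  then show ?thesis using par_off[OF x True] unfolding ht_def by simp
next
  case False
  have l2: "x!mm \<ge> 2" using not_off_last[OF x False r] .
  have A: "x!mm = par x ! mm + 1" and B: "DD (par x) = DD x" using par_not_off[OF x False r] by simp_all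
  obtain p q where pq: "x!mm = p" "par x ! mm = q" by blast
  have "ht (par x) = DD x + (q - 1)" "ht x = DD x + (p - 1)" unfolding ht_def using B pq by simp_all
  moreover have "p = q + 1" "p \<ge> 2" using A l2 pq by simp_all
  ultimately show ?thesis by simp
qed

lemma par_V: "x \<in> grid_V ns \<Longrightarrow> x \<noteq> root \<Longrightarrow> par x \<in> grid_V ns"
  using par_off par_not_off by (cases "off x") auto

lemma par_E: "x \<in> grid_V ns \<Longrightarrow> x \<noteq> root \<Longrightarrow> {x, par x} \<in> grid_E ns"
  using par_off par_not_off by (cases "off x") auto

lemma T0_E: "T0 \<subseteq> grid_E ns"
  unfolding T0_def using par_E by auto

lemma T0_nb: assumes "{y, w} \<in> T0" "ht w \<le> ht y" shows "w = par y"
proof -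
  obtain x where x: "x \<in> grid_V ns" "x \<noteq> root" "{y,w} = {x, par x}" using assms(1) unfolding T0_def by blast
  have h: "ht (par x) + 1 = ht x" using ht_par[OF x(1,2)] .
  from x(3) have "(y = x \<and> w = par x) \<or> (y = par x \<and> w = x)" by (auto simp: doubleton_eq_iff)
  then show ?thesis using h assms(2) by auto
qed

lemma T0_acyclic: "acyclic_edges T0"
  unfolding acyclic_edges_def
proof
  assume "\<exists>xs. 3 \<le> length xs \<and> distinct xs \<and> walk T0 xs \<and> {last xs, hd xs} \<in> T0"
  then obtain xs where xs: "3 \<le> length xs" "distinct xs" "walk T0 xs" "{last xs, hd xs} \<in> T0" by blast
  let ?L = "length xs"
  have ne: "xs \<noteq> []" using xs by auto
  define H where "H = ht ` set xs"
  have "finite H" "H \<noteq> {}" using ne unfolding H_def by auto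
  then have "Max H \<in> H" by simp
  then obtain k where k: "k < ?L" "ht (xs!k) = Max H" unfolding H_def by (metis imageE in_set_conv_nth)
  have mx: "ht (xs!i) \<le> ht (xs!k)" if "i < ?L" for i
    using that k \<open>finite H\<close> unfolding H_def by (simp add: Max_ge)
  have hdl: "hd xs = xs!0" "last xs = xs!(?L - 1)" using ne by (simp_all add: hd_conv_nth last_conv_nth)
  have en: "{xs!i, xs!Suc i} \<in> T0" if "Suc i < ?L" for i using walk_nth[OF xs(3) that] .
  obtain k1 k2 where kk: "k1 < ?L" "k2 < ?L" "k1 \<noteq> k2" "{xs!k, xs!k1} \<in> T0" "{xs!k, xs!k2} \<in> T0"
  proof (cases "k = 0")
    case True
    show ?thesis
      apply (rule that[of 1 "?L - 1"])
      using xs(1) True en[of 0] xs(4) hdl by (auto simp: insert_commute)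
  next
    case False
    show ?thesis
    proof (cases "k = ?L - 1")
      case True
      show ?thesis
        apply (rule that[of "?L - 2" 0])
        using xs(1) True en[of "?L - 2"] xs(4) hdl by (auto simp: insert_commute Suc_diff_Suc numeral_2_eq_2)
    next
      case False2: False
      show ?thesis
        apply (rule that[of "k - 1" "k + 1"])
        using xs(1) False False2 k(1) en[of "k - 1"] en[of k] by (auto simp: insert_commute)
    qed
  qed
  have "xs!k1 = par (xs!k)" using T0_nb[OF kk(4)] mx kk(1) by blast
  moreover have "xs!k2 = par (xs!k)" using T0_nb[OF kk(5)] mx kk(2) by blast
  ultimately have "xs!k1 = xs!k2" by simp
  then show False using xs(2) kk(1-3) by (simp add: nth_eq_iff_index_eq)
qed

lemma to_root: "x \<in> grid_V ns \<Longrightarrow> \<exists>ws. walk T0 ws \<and> hd ws = x \<and> last ws = root"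
proof (induction "ht x" arbitrary: x rule: less_induct)
  case less
  show ?case
  proof (cases "x = root")
    case True then show ?thesis by (intro exI[of _ "[x]"]) simp
  next
    case False
    have pV: "par x \<in> grid_V ns" using par_V less.prems False by blast
    have "ht (par x) < ht x" using ht_par[OF less.prems False] by simp
    then obtain ws where ws: "walk T0 ws" "hd ws = par x" "last ws = root" using less.hyps pV by blast
    have e: "{x, par x} \<in> T0" unfolding T0_def using less.prems False by blast
    have "walk T0 (x # ws)" using ws e walk_Cons by metis
    moreover have "ws \<noteq> []" using ws by auto
    ultimately show ?thesis using ws by (intro exI[of _ "x # ws"]) auto
  qed
qed

lemma T0_conn: "connected_on (grid_V ns) T0"
  unfolding connected_on_def
proof (intro ballI)
  fix u v assume u: "u \<in> grid_V ns" and v: "v \<in> grid_V ns"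
  obtain wu where wu: "walk T0 wu" "hd wu = u" "last wu = root" using to_root[OF u] by blast
  obtain wv where wv: "walk T0 wv" "hd wv = v" "last wv = root" using to_root[OF v] by blast
  have r: "walk T0 (rev wv)" "hd (rev wv) = root" "last (rev wv) = v" "rev wv \<noteq> []"
    using wv walk_rev by (auto simp: hd_rev last_rev)
  have ne: "wu \<noteq> []" using wu by auto
  show "\<exists>xs. walk T0 xs \<and> hd xs = u \<and> last xs = v"
    using walk_join[OF wu(1) r(1)] join_last[OF ne r(4)] wu r ne
    by (intro exI[of _ "wu @ tl (rev wv)"]) simp
qed

lemma T0_tree: "spanning_tree (grid_V ns) (grid_E ns) T0"
  unfolding spanning_tree_def using T0_E T0_conn T0_acyclic by blast

end


context grid
begin

lemma DD_le: assumes x: "x \<in> grid_V ns" shows "DD x \<le> R"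
  unfolding DD_def R_def
proof (rule sum_mono)
  fix i assume "i \<in> {..<mm}"
  then have il: "i < length ns" by simp
  then have "1 \<le> x!i" "x!i \<le> ns!i" using x unfolding grid_V_def by auto
  then show "dd (x ! i) (cen i) \<le> ns ! i div 2" using dd_cen[OF il] by simp
qed

lemma DD_not_off: "\<not> off x \<Longrightarrow> DD x = 0"
  unfolding DD_def off_def by (intro sum.neutral) auto

lemma to_anc: "x \<in> grid_V ns \<Longrightarrow> \<exists>ws. walk T0 ws \<and> hd ws = x \<and> last ws = anc x \<and> length ws = DD x + 1"
proof (induction "DD x" arbitrary: x rule: less_induct)
  case less
  show ?case
  proof (cases "off x")
    case False
    then show ?thesis using not_off_anc[OF less.prems False] DD_not_off[OF False]
      by (intro exI[of _ "[x]"]) simp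
  next
    case True
    have r: "x \<noteq> root" using True root_not_off by auto
    note po = par_off[OF less.prems True]
    have "DD (par x) < DD x" using po(3) by simp
    then obtain ws where ws: "walk T0 ws" "hd ws = par x" "last ws = anc (par x)" "length ws = DD (par x) + 1"
      using less.hyps po(1) by blast
    have e: "{x, par x} \<in> T0" unfolding T0_def using less.prems r by blast
    have "walk T0 (x # ws)" using ws e walk_Cons by metis
    moreover have "ws \<noteq> []" using ws by auto
    ultimately show ?thesis using ws po(3,5) by (intro exI[of _ "x # ws"]) auto
  qed
qed

lemma vert:
  assumes u: "u \<in> grid_V ns" and v: "v \<in> grid_V ns" and uv: "v!mm = u!mm + 1"
  shows "{anc u, anc v} \<in> T0"
proof -
  obtain p q where pq: "u!mm = p" "v!mm = q" by blast
  have qp: "q = p + 1" using uv pq by simp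
  have avV: "anc v \<in> grid_V ns" using anc_V[OF v] .
  have am: "anc v ! mm = q" "anc u ! mm = p" using dm pq by (simp_all add: anc_nth)
  have "\<forall>i<length ns. 1 \<le> u!i" using u unfolding grid_V_def by auto
  then have "p \<ge> 1" using dm pq by blast
  then have v2: "q \<ge> 2" using qp by simp
  have "root ! mm = 1" using dm by (simp add: root_nth)
  then have r: "anc v \<noteq> root" using v2 am by auto
  have "par (anc v) = (anc v)[mm := anc v ! mm - 1]" using par_not_off(3)[OF avV anc_not_off r] .
  also have "\<dots> = anc u"
  proof (rule nth_equalityI)
    show "length ((anc v)[mm := anc v ! mm - 1]) = length (anc u)" by simp
    fix i assume "i < length ((anc v)[mm := anc v ! mm - 1])"
    then have il: "i < length ns" by simp
    show "(anc v)[mm := anc v ! mm - 1] ! i = anc u ! i"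
    proof (cases "i = mm")
      case True
      have "(anc v)[mm := anc v ! mm - 1] ! mm = q - 1" using am dm by simp
      also have "q - 1 = p" using qp by simp
      finally show ?thesis using True am by simp
    next
      case False
      then have "i < mm" using il by simp
      then show ?thesis using False il by (simp add: anc_nth)
    qed
  qed
  finally have pa: "par (anc v) = anc u" .
  have "{anc v, par (anc v)} \<in> T0" unfolding T0_def using avV r by blast
  then show ?thesis unfolding pa by (simp add: insert_commute)
qed

lemma vert_walk:
  assumes u: "u \<in> grid_V ns" and v: "v \<in> grid_V ns" and uv: "v!mm = u!mm + 1"
  shows "\<exists>ws. walk T0 ws \<and> hd ws = u \<and> last ws = v \<and> length ws \<le> 2*R + 2"
proof -
  obtain wu where wu: "walk T0 wu" "hd wu = u" "last wu = anc u" "length wu = DD u + 1" using to_anc[OF u] by blast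
  obtain wv where wv: "walk T0 wv" "hd wv = v" "last wv = anc v" "length wv = DD v + 1" using to_anc[OF v] by blast
  have r: "walk T0 (rev wv)" "hd (rev wv) = anc v" "last (rev wv) = v" "rev wv \<noteq> []" "length (rev wv) = DD v + 1"
    using wv walk_rev by (auto simp: hd_rev last_rev)
  have e: "walk T0 [anc u, anc v]" using vert[OF u v uv] by simp
  have ne: "wu \<noteq> []" using wu by auto
  have w1: "walk T0 (wu @ [anc v])" "last (wu @ [anc v]) = anc v" "hd (wu @ [anc v]) = u"
      "length (wu @ [anc v]) = DD u + 2"
    using walk_join[OF wu(1) e] wu ne by auto
  have "walk T0 ((wu @ [anc v]) @ tl (rev wv))" using walk_join[OF w1(1) r(1)] w1 r by simp
  moreover have "hd ((wu @ [anc v]) @ tl (rev wv)) = u" using ne wu by simp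
  moreover have "last ((wu @ [anc v]) @ tl (rev wv)) = v" using join_last[of "wu @ [anc v]" "rev wv"] w1 r by simp
  moreover have "length ((wu @ [anc v]) @ tl (rev wv)) = DD u + DD v + 2" using w1 r by (simp add: join_length)
  moreover have "DD u \<le> R" "DD v \<le> R" using DD_le u v by auto
  ultimately show ?thesis by (intro exI[of _ "(wu @ [anc v]) @ tl (rev wv)"]) auto
qed

lemma stretch_walk:
  assumes e: "{u,v} \<in> grid_E ns"
  shows "\<exists>ws. walk T0 ws \<and> hd ws = u \<and> last ws = v \<and> length ws \<le> 2*R + 2"
proof -
  obtain i where i: "i < length ns" "u!i = v!i+1 \<or> v!i = u!i+1" "\<forall>j<length ns. j\<noteq>i \<longrightarrow> u!j = v!j"
    and u: "u \<in> grid_V ns" and v: "v \<in> grid_V ns"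
    using e unfolding grid_E_iff by blast
  show ?thesis
  proof (cases "i < mm")
    case True
    have aa: "anc u = anc v"
    proof (rule nth_equalityI)
      fix k assume "k < length (anc u)"
      then have kl: "k < length ns" by simp
      show "anc u ! k = anc v ! k"
      proof (cases "k < mm")
        case True then show ?thesis using kl by (simp add: anc_nth)
      next
        case False then have "k \<noteq> i" using \<open>i < mm\<close> by auto
        then show ?thesis using kl i(3) by (simp add: anc_nth)
      qed
    qed simp
    obtain wu where wu: "walk T0 wu" "hd wu = u" "last wu = anc u" "length wu = DD u + 1" using to_anc[OF u] by blast
    obtain wv where wv: "walk T0 wv" "hd wv = v" "last wv = anc v" "length wv = DD v + 1" using to_anc[OF v] by blast
    have r: "walk T0 (rev wv)" "hd (rev wv) = anc v" "last (rev wv) = v" "rev wv \<noteq> []" "length (rev wv) = DD v + 1"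
      using wv walk_rev by (auto simp: hd_rev last_rev)
    have ne: "wu \<noteq> []" using wu by auto
    have "walk T0 (wu @ tl (rev wv))" using walk_join[OF wu(1) r(1)] wu r aa by simp
    moreover have "hd (wu @ tl (rev wv)) = u" using wu ne by simp
    moreover have "last (wu @ tl (rev wv)) = v" using join_last[OF ne r(4)] wu r aa by simp
    moreover have "length (wu @ tl (rev wv)) = DD u + DD v + 1" using wu r by (simp add: join_length)
    moreover have "DD u \<le> R" "DD v \<le> R" using DD_le u v by auto
    ultimately show ?thesis by (intro exI[of _ "wu @ tl (rev wv)"]) auto
  next
    case False
    then have im: "i = mm" using i(1) by simp
    show ?thesis
    proof (cases "v!i = u!i+1")
      case True
      then show ?thesis using vert_walk[OF u v] im by simp
    next
      case False
      then have "u!mm = v!mm + 1" using i(2) im by simp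
      then obtain ws where ws: "walk T0 ws" "hd ws = v" "last ws = u" "length ws \<le> 2*R + 2"
        using vert_walk[OF v u] by blast
      then show ?thesis using walk_rev[OF ws(1)]
        by (intro exI[of _ "rev ws"]) (auto simp: hd_rev last_rev)
    qed
  qed
qed

lemma tdist_le:
  assumes "walk T ws" "hd ws = u" "last ws = v"
  shows "tdist T u v \<le> length ws - 1"
proof -
  have "ws \<noteq> []" using assms by auto
  then have "length ws = (length ws - 1) + 1" by simp
  then show ?thesis unfolding tdist_def using assms by (intro Least_le) blast
qed

lemma edge_V: "{u,v} \<in> grid_E ns \<Longrightarrow> u \<in> grid_V ns \<and> v \<in> grid_V ns"
  unfolding grid_E_iff by blast

lemma finite_tdists: "finite {tdist T u v | u v. {u,v} \<in> grid_E ns}"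
proof -
  have "{tdist T u v | u v. {u,v} \<in> grid_E ns} \<subseteq> (\<lambda>p. tdist T (fst p) (snd p)) ` (grid_V ns \<times> grid_V ns)"
    using edge_V by force
  moreover have "finite ((\<lambda>p. tdist T (fst p) (snd p)) ` (grid_V ns \<times> grid_V ns))"
    using finite_grid_V by simp
  ultimately show ?thesis by (rule finite_subset)
qed

lemma some_edge: "\<exists>u v. {u,v} \<in> grid_E ns"
proof -
  let ?u = "replicate (length ns) (1::nat)"
  let ?v = "?u[0 := 2]"
  have l0: "0 < length ns" using len by (cases ns) auto
  have "?u \<in> grid_V ns" using ge2 unfolding grid_V_def by auto
  moreover have "?v \<in> grid_V ns" using ge2 l0 unfolding grid_V_def by (auto simp: nth_list_update)
  moreover have "?v!0 = ?u!0 + 1" using l0 by simp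
  moreover have "\<forall>j<length ns. j\<noteq>0 \<longrightarrow> ?u!j = ?v!j" by simp
  ultimately have "{?u,?v} \<in> grid_E ns" unfolding grid_E_iff using l0 by blast
  then show ?thesis by blast
qed

lemma stretch_T0: "tree_stretch (grid_E ns) T0 \<le> 2*R + 1"
  unfolding tree_stretch_def
proof (rule Max.boundedI)
  show "finite {tdist T0 u v | u v. {u,v} \<in> grid_E ns}" by (rule finite_tdists)
  show "{tdist T0 u v | u v. {u,v} \<in> grid_E ns} \<noteq> {}" using some_edge by blast
  fix a assume "a \<in> {tdist T0 u v | u v. {u,v} \<in> grid_E ns}"
  then obtain u v where a: "a = tdist T0 u v" "{u,v} \<in> grid_E ns" by blast
  obtain ws where ws: "walk T0 ws" "hd ws = u" "last ws = v" "length ws \<le> 2*R + 2"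
    using stretch_walk[OF a(2)] by blast
  show "a \<le> 2*R + 1" using tdist_le[OF ws(1-3)] ws(4) a(1) by simp
qed

lemma stretch_lower:
  assumes st: "spanning_tree (grid_V ns) (grid_E ns) T"
  shows "tree_stretch (grid_E ns) T \<ge> 2*R + 1"
proof -
  obtain u v where e: "{u,v} \<in> grid_E ns" and all: "\<forall>ws. walk T ws \<and> hd ws = u \<and> last ws = v \<longrightarrow> length ws \<ge> 2*R + 2"
    using lower_edge[OF st] by blast
  have conn: "connected_on (grid_V ns) T" using st unfolding spanning_tree_def by blast
  have "tdist T u v \<ge> 2*R + 1"
    using tdist_ge[OF conn, of u v "2*R+1"] edge_V[OF e] all by simp
  moreover have "tdist T u v \<le> tree_stretch (grid_E ns) T"
    unfolding tree_stretch_def using e by (intro Max_ge[OF finite_tdists]) blast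
  ultimately show ?thesis by simp
qed

lemma main: "sigmaT (grid_V ns) (grid_E ns) = 2*R + 1"
proof -
  let ?S = "{tree_stretch (grid_E ns) T | T. spanning_tree (grid_V ns) (grid_E ns) T}"
  have fin: "finite ?S"
  proof -
    have "?S \<subseteq> tree_stretch (grid_E ns) ` Pow (grid_E ns)"
      unfolding spanning_tree_def by blast
    then show ?thesis using finite_grid_E finite_subset by blast
  qed
  have T0S: "tree_stretch (grid_E ns) T0 \<in> ?S" using T0_tree by blast
  then have ne: "?S \<noteq> {}" by blast
  have "Min ?S \<le> 2*R + 1" using Min_le[OF fin T0S] stretch_T0 by simp
  moreover have "Min ?S \<in> ?S" using Min_in[OF fin ne] .
  then have "Min ?S \<ge> 2*R + 1" using stretch_lower by auto
  ultimately show ?thesis unfolding sigmaT_def by simp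
qed

end

theorem theorem4p2:
  fixes ns :: "nat list"
  assumes "length ns \<ge> 1"
    and "sorted ns"
    and "\<forall>i < length ns. ns ! i \<ge> 2"
  shows "sigmaT (grid_V ns) (grid_E ns) = 2 * (\<Sum>i < length ns - 1. ns ! i div 2) + 1"
proof -
  interpret grid ns using assms by unfold_locales
  show ?thesis using main unfolding R_def .
qed

end
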